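(* Let $0<k\le1$. (i) The system $$R(\bar{x};\underline{x},\bar{x})=\tfrac1k,\qquad J'(\bar{x}-;\underline{x},\bar{x})=1$$ has a unique solution $(\underline{x},\bar{x})$ with $\bar{x}>\underline{x}\ge0$, and it satisfies $0\le\underline{x}<x^*<\bar{x}$. Moreover, if $k=1$ then $\underline{x}=0$, and if $k<1$ then $\underline{x}>0$. (ii) For this unique solution, $\bar{x}$ satisfies the equation $J'\big(\bar{x}-;\bar{x}-k\tfrac{g(\bar{x})}{g'(\bar{x})},\bar{x}\big)=1$ and $\underline{x}=\bar{x}-k\frac{g(\bar{x})}{g'(\bar{x})}$. (iii) The equation in (ii) is equivalent to $g\big(\bar{x}-k\tfrac{g(\bar{x})}{g'(\bar{x})}\big)=(1-k)g(\bar{x})$.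
   Context: Fix $r>0$ and $\mu,\sigma:\mathbb{R}\to\mathbb{R}$ satisfying: (A.1) $\mu,\sigma$ are continuously differentiable and Lipschitz continuous, and $\mu',\sigma'$ are Lipschitz continuous; (A.2) $\sigma^2(x)>0$ for $x\ge0$; (A.3) $\mu'(x)<r$ for $x\ge0$; (A.4) there are $\varepsilon>0$, $x_a\ge0$ with $\mu'(x)<r-\varepsilon$ for $x\ge x_a$; (A.5) $\mu(0)>0$. Let $g$ be a canonical solution: $g\in C^2(0,\infty)$, $\mu g'+\frac12\sigma^2g''=rg$ on $(0,\infty)$, $g(0)=0$, $g'(0)>0$; then $g'>0$ on $[0,\infty)$, and $x^*\in(0,\infty)$ denotes the unique point with $g''(x^* )=0$, $g''<0$ on $(0,x^* )$, $g''>0$ on $(x^*,\infty)$. For the surplus $dX_t=\mu(X_t)dt+\sigma(X_t)dW_t-dD_t$, $X_0=x$, with bankruptcy time $\tau=\inf\{t\ge0:X_t\le0\}$, and $\bar{x}>\underline{x}\ge0$, the constant lump sum dividend barrier policy $(\underline{x},\bar{x})$ pays $\bar{x}-\underline{x}$ at the times $\tau_1=\inf\{t>0:X_t\ge\bar{x}\}$, $\tau_n=\inf\{t>\tau_{n-1}:X_t\ge\bar{x}\}$, plus $x-\underline{x}$ at time $0$ if $x\ge\bar{x}$. $J(x;\underline{x},\bar{x})=\mathbb{E}_x\big(\sum_{n:\tau_n\le\tau}e^{-r\tau_n}\zeta_n\big)$ and $R(x;\underline{x},\bar{x})=\mathbb{E}_x\big(\sum_{n:\tau_n\le\tau}e^{-r\tau_n}\big)$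 for this policy ($\zeta_n$ the dividends); explicitly $J(x;\underline{x},\bar{x})=g(x)\frac{\bar{x}-\underline{x}}{g(\bar{x})-g(\underline{x})}$, $R(x;\underline{x},\bar{x})=\frac{g(x)}{g(\bar{x})-g(\underline{x})}$ for $0\le x\le\bar{x}$. $J'$ denotes the derivative in $x$ and $J'(\bar{x}-;\cdot)$ the left derivative at $\bar{x}$. *)

theory Defs
  imports "HOL-Analysis.Analysis"
begin

text \<open>Value of the constant lump sum dividend barrier policy (lo, hi), explicit
 formula valid for 0 <= x <= hi:  J(x;lo,hi) = g(x) (hi - lo) / (g(hi) - g(lo)).\<close>
definition Jfun :: "(real \<Rightarrow> real) \<Rightarrow> real \<Rightarrow> real \<Rightarrow> real \<Rightarrow> real" where
  "Jfun g lo hi x = g x * (hi - lo) / (g hi - g lo)"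

text \<open>Expected discounted number of dividend payments, formula valid for 0 <= x <= hi:
 R(x;lo,hi) = g(x) / (g(hi) - g(lo)).\<close>
definition Rfun :: "(real \<Rightarrow> real) \<Rightarrow> real \<Rightarrow> real \<Rightarrow> real \<Rightarrow> real" where
  "Rfun g lo hi x = g x / (g hi - g lo)"

definition Jleft_deriv_eq :: "(real \<Rightarrow> real) \<Rightarrow> real \<Rightarrow> real \<Rightarrow> real \<Rightarrow> bool" where
  "Jleft_deriv_eq g lo hi D \<longleftrightarrow> ((\<lambda>x. Jfun g lo hi x) has_real_derivative D) (at_left hi)"

end

theory Submission imports Defs begin

lemma Jleft_iff:
  assumes "(g has_real_derivative d) (at hi)"
  shows "Jleft_deriv_eq g lo hi D \<longleftrightarrow> D = d * (hi - lo) / (g hi - g lo)"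
proof -
  have "((\<lambda>x. Jfun g lo hi x) has_real_derivative d * (hi - lo) / (g hi - g lo)) (at hi)"
    unfolding Jfun_def using assms by (intro DERIV_cdivide DERIV_cmult_right) 
  then have d: "((\<lambda>x. Jfun g lo hi x) has_real_derivative d * (hi - lo) / (g hi - g lo)) (at_left hi)"
    by (rule has_field_derivative_at_within)
  show ?thesis
  proof
    assume "Jleft_deriv_eq g lo hi D"
    then have "((\<lambda>x. Jfun g lo hi x) has_real_derivative D) (at_left hi)" unfolding Jleft_deriv_eq_def .
    then show "D = d * (hi - lo) / (g hi - g lo)"
      using d has_field_derivative_unique trivial_limit_at_left_real by blast
  next
    assume "D = d * (hi - lo) / (g hi - g lo)"
    then show "Jleft_deriv_eq g lo hi D" unfolding Jleft_deriv_eq_def using d by simp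
  qed
qed

locale setting =
  fixes r k xs xa eps :: real and mu sig mu' g g1 g2 :: "real \<Rightarrow> real"
  assumes r_pos: "r > 0"
    and mu_deriv: "\<And>x. (mu has_real_derivative mu' x) (at x)"
    and sig_lip: "\<exists>C. C-lipschitz_on UNIV sig"
    and A2: "\<And>x. x \<ge> 0 \<Longrightarrow> (sig x)\<^sup>2 > 0"
    and eps_pos: "eps > 0" and eps_lt: "eps < r" and xa_nn: "xa \<ge> 0" and A4: "\<And>x. x \<ge> xa \<Longrightarrow> mu' x < r - eps"
    and g_deriv: "\<And>x. x > 0 \<Longrightarrow> (g has_real_derivative g1 x) (at x)"
    and g1_deriv: "\<And>x. x > 0 \<Longrightarrow> (g1 has_real_derivative g2 x) (at x)"
    and g_ode: "\<And>x. x > 0 \<Longrightarrow> mu x * g1 x + (sig x)\<^sup>2 / 2 * g2 x = r * g x"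
    and g_0: "g 0 = 0"
    and g_deriv0: "(g has_real_derivative g1 0) (at 0 within {0..})"
    and g1_0: "g1 0 > 0"
    and xs_pos: "xs > 0"
    and xs_infl: "g2 xs = 0"
    and g2_neg: "\<And>x. 0 < x \<Longrightarrow> x < xs \<Longrightarrow> g2 x < 0"
    and g2_pos: "\<And>x. xs < x \<Longrightarrow> g2 x > 0"
    and k_pos: "0 < k" and k_le: "k \<le> 1"
begin

lemma g_cont: "continuous_on {0..} g"
proof -
  have "continuous (at x within {0..}) g" if "x \<in> {0..}" for x
  proof (cases "x = 0")
    case True
    then show ?thesis using g_deriv0 DERIV_continuous by blast
  next
    case False
    then have "x > 0" using that by auto
    then show ?thesis using g_deriv[of x] DERIV_isCont continuous_at_imp_continuous_within by blast
  qed
  then show ?thesis using continuous_on_eq_continuous_within by blast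
qed

lemma g_mvt:
  assumes "0 \<le> a" "a < b"
  shows "\<exists>c. a < c \<and> c < b \<and> g b - g a = g1 c * (b - a)"
proof -
  have "continuous_on {a..b} g" using g_cont continuous_on_subset assms by fastforce
  moreover have "g differentiable at x" if "a < x" "x < b" for x
    using g_deriv[of x] that assms real_differentiable_def by fastforce
  ultimately obtain l c where c: "a < c" "c < b" "(g has_real_derivative l) (at c)" "g b - g a = (b - a) * l"
    using MVT[OF assms(2)] by blast
  then have "l = g1 c" using g_deriv[of c] assms DERIV_unique by fastforce
  then show ?thesis using c by (auto simp: mult.commute)
qed

lemma g1_mvt:
  assumes "0 < a" "a < b"
  shows "\<exists>c. a < c \<and> c < b \<and> g1 b - g1 a = g2 c * (b - a)"
proof -
  have "\<And>x. a \<le> x \<Longrightarrow> x \<le> b \<Longrightarrow> (g1 has_real_derivative g2 x) (at x)"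
    using g1_deriv assms by auto
  then show ?thesis using MVT2[OF assms(2)] by (metis mult.commute)
qed

lemma g1_dec: "0 < a \<Longrightarrow> a < b \<Longrightarrow> b \<le> xs \<Longrightarrow> g1 b < g1 a"
proof -
  assume h: "0 < a" "a < b" "b \<le> xs"
  then obtain c where "a < c" "c < b" "g1 b - g1 a = g2 c * (b - a)" using g1_mvt by blast
  moreover have "g2 c < 0" using g2_neg h \<open>a < c\<close> \<open>c < b\<close> by auto
  moreover have "g2 c * (b - a) < 0" using \<open>g2 c < 0\<close> h by (simp add: mult_neg_pos)
  ultimately show ?thesis by linarith
qed

lemma g1_inc: "xs \<le> a \<Longrightarrow> a < b \<Longrightarrow> g1 a < g1 b"
proof -
  assume h: "xs \<le> a" "a < b"
  have "0 < a" using h xs_pos by linarith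
  then obtain c where "a < c" "c < b" "g1 b - g1 a = g2 c * (b - a)" using g1_mvt h by blast
  moreover have "g2 c > 0" using g2_pos h \<open>a < c\<close> by auto
  moreover have "g2 c * (b - a) > 0" using \<open>g2 c > 0\<close> h by simp
  ultimately show ?thesis by linarith
qed

lemma g1_inc': "xs \<le> a \<Longrightarrow> a \<le> b \<Longrightarrow> g1 a \<le> g1 b"
  using g1_inc by (cases "a = b") (auto intro: less_imp_le)

lemma g1_pos_near0: "\<exists>c. 0 < c \<and> c < xs \<and> g1 c > 0"
proof -
  have "((\<lambda>y. (g y - g 0) / (y - 0)) \<longlongrightarrow> g1 0) (at 0 within {0..})"
    using g_deriv0 has_field_derivative_iff by blast
  then have "\<forall>\<^sub>F y in at 0 within {0..}. (g y - g 0) / (y - 0) > 0"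
    using g1_0 order_tendstoD(1) by blast
  moreover have "\<forall>\<^sub>F y in at 0 within {0..}. y \<in> {0<..<xs}"
  proof -
    have "\<forall>\<^sub>F y in at 0 within {0..}. y < xs" 
      using order_tendstoD(2)[OF tendsto_ident_at[of 0 "{0..}"]] xs_pos by blast
    moreover have "\<forall>\<^sub>F y in at 0 within {0..}. y \<in> {0..} - {0}"
      by (simp add: eventually_at_filter)
    ultimately show ?thesis by eventually_elim auto
  qed
  ultimately have "\<forall>\<^sub>F y in at 0 within {0..}. y \<in> {0<..<xs} \<and> (g y - g 0) / (y - 0) > 0"
    by eventually_elim auto
  moreover have "at (0::real) within {0..} \<noteq> bot"
    by (simp add: at_within_Ici_at_right)
  ultimately obtain y where y: "y \<in> {0<..<xs}" "(g y - g 0) / (y - 0) > 0"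
    using eventually_happens by blast
  then obtain c where c: "0 < c" "c < y" "g y - g 0 = g1 c * (y - 0)" using g_mvt[of 0 y] by auto
  then have "g1 c > 0" using y by (simp add: zero_less_mult_iff)
  then show ?thesis using c y by auto
qed


lemma g1_cont: "x > 0 \<Longrightarrow> isCont g1 x"
  using g1_deriv DERIV_isCont by blast

lemma g1_xs_pos: "g1 xs > 0"
proof (rule ccontr)
  assume "\<not> g1 xs > 0"
  then have n: "g1 xs \<le> 0" by simp
  obtain c where c: "0 < c" "c < xs" "g1 c > 0" using g1_pos_near0 by blast
  have "continuous_on {c..xs} g1"
    using g1_cont c by (intro continuous_at_imp_continuous_on) auto
  then obtain z where z: "c \<le> z" "z \<le> xs" "g1 z = 0"
    using IVT2'[of g1 xs 0 c] n c by auto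
  have zpos: "z > 0" using z c by linarith
  obtain c' where c': "0 < c'" "c' < z" "g z - g 0 = g1 c' * (z - 0)" using g_mvt[of 0 z] zpos by auto
  have "g1 c' > g1 z" using g1_dec[of c' z] c' z by auto
  then have "g z > 0" using c' z g_0 by simp
  then have "(sig z)\<^sup>2 / 2 * g2 z > 0" using g_ode[OF zpos] z r_pos by simp
  then have "g2 z > 0" using A2[of z] zpos by (simp add: zero_less_mult_iff)
  moreover have "g2 z \<le> 0" using z g2_neg[of z] xs_infl zpos by (cases "z = xs") auto
  ultimately show False by simp
qed

lemma g1_pos: "x \<ge> 0 \<Longrightarrow> g1 x > 0"
proof -
  assume x: "x \<ge> 0"
  consider "x = 0" | "0 < x" "x < xs" | "x = xs" | "x > xs" using x by linarith
  then show ?thesis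
  proof cases
    case 1 then show ?thesis using g1_0 by simp
  next
    case 2 then show ?thesis using g1_dec[of x xs] g1_xs_pos by simp
  next
    case 3 then show ?thesis using g1_xs_pos by simp
  next
    case 4 then show ?thesis using g1_inc[of xs x] g1_xs_pos by simp
  qed
qed

lemma g_mono: "0 \<le> a \<Longrightarrow> a < b \<Longrightarrow> g a < g b"
proof -
  assume h: "0 \<le> a" "a < b"
  then obtain c where c: "a < c" "c < b" "g b - g a = g1 c * (b - a)" using g_mvt by blast
  have "g1 c > 0" using g1_pos c h by simp
  then have "g1 c * (b - a) > 0" using h by simp
  then show ?thesis using c by linarith
qed

lemma g_pos: "x > 0 \<Longrightarrow> g x > 0"
  using g_mono[of 0 x] g_0 by simp


lemma mu_le: "y \<ge> xa \<Longrightarrow> mu y \<le> mu xa + (r - eps) * (y - xa)"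
proof (cases "y = xa")
  case False
  assume y: "y \<ge> xa"
  then have "xa < y" using False by simp
  then obtain z where z: "xa < z" "z < y" "mu y - mu xa = (y - xa) * mu' z"
    using MVT2[of xa y mu mu'] mu_deriv by blast
  have "mu' z < r - eps" using A4 z by simp
  then have ineq: "(y - xa) * mu' z \<le> (y - xa) * (r - eps)" using \<open>xa < y\<close> by simp
  have "mu y - mu xa \<le> (r - eps) * (y - xa)" using z(3) ineq by (simp add: mult.commute)
  then show ?thesis by linarith
qed simp

lemma g1_unbounded: "\<exists>y\<ge>xs. g1 y \<ge> B"
proof (rule ccontr)
  assume "\<not> ?thesis"
  then have bnd: "\<And>y. y \<ge> xs \<Longrightarrow> g1 y < B" by auto
  define L where "L = Sup (g1 ` {xs..})"
  have bdd: "bdd_above (g1 ` {xs..})" using bnd by (intro bdd_aboveI2[where M=B]) (auto intro: less_imp_le)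
  have le_L: "\<And>y. y \<ge> xs \<Longrightarrow> g1 y \<le> L" unfolding L_def by (rule cSup_upper) (auto intro: bdd)
  have L_pos: "L > 0" using le_L[of xs] g1_pos[of xs] xs_pos by force
  define eta where "eta = eps * L / (2*r)"
  have eta_pos: "eta > 0" unfolding eta_def using eps_pos L_pos r_pos by simp
  have r_eta: "r * eta = eps * L / 2" unfolding eta_def using r_pos by simp
  have "L - eta < Sup (g1 ` {xs..})" using eta_pos L_def by simp
  then obtain Y where Y: "Y \<ge> xs" "g1 Y > L - eta"
    using less_cSupE[of "L - eta" "g1 ` {xs..}"] by auto
  have g1_ge: "\<And>y. y \<ge> Y \<Longrightarrow> g1 y \<ge> L - eta" using g1_inc'[of Y] Y by force
  have g_ge: "g y \<ge> g Y + (L - eta) * (y - Y)" if y: "y \<ge> Y" for y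
  proof (cases "y = Y")
    case False
    then have "Y < y" using y by simp
    then obtain c where c: "Y < c" "c < y" "g y - g Y = g1 c * (y - Y)"
      using g_mvt[of Y y] Y xs_pos by auto
    have "g1 c \<ge> L - eta" using g1_ge c by simp
    then have "g1 c * (y - Y) \<ge> (L - eta) * (y - Y)" using \<open>Y < y\<close> by (intro mult_right_mono) auto
    then show ?thesis using c by linarith
  qed simp
  define C where "C = mu xa - (r - eps) * xa"
  have rme: "r - eps > 0" using eps_lt by simp
  have mug: "mu y * g1 y \<le> (C + (r - eps) * y) * L" if y: "y \<ge> xa" "y \<ge> -C/(r-eps)" "y \<ge> xs" for y
  proof -
    have "-C \<le> y * (r - eps)" using y(2) pos_divide_le_eq[OF rme, of "-C" y] by simp
    then have b0: "C + (r - eps) * y \<ge> 0" by (simp add: algebra_simps)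
    have mub: "mu y \<le> C + (r - eps) * y" using mu_le[OF y(1)] by (simp add: C_def algebra_simps)
    have g1y: "0 < g1 y" "g1 y \<le> L" using g1_pos[of y] le_L[of y] y xs_pos by auto
    show ?thesis
    proof (cases "mu y \<ge> 0")
      case True
      have "mu y * g1 y \<le> mu y * L" using True g1y by (intro mult_left_mono) auto
      also have "\<dots> \<le> (C + (r - eps) * y) * L" using mub L_pos by (intro mult_right_mono) auto
      finally show ?thesis .
    next
      case False
      then have "mu y * g1 y \<le> 0" using g1y by (simp add: mult_nonpos_nonneg)
      also have "0 \<le> (C + (r - eps) * y) * L" using b0 L_pos by simp
      finally show ?thesis .
    qed
  qed
  define D where "D = eps * L / 2"
  have D_pos: "D > 0" unfolding D_def using eps_pos L_pos by simp
  define K0 where "K0 = r * g Y - r * (L - eta) * Y - C * L"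
  have key1: "r * g y - mu y * g1 y \<ge> D * y + K0" if y: "y \<ge> Y" "y \<ge> xa" "y \<ge> -C/(r-eps)" for y
  proof -
    have "r * g y \<ge> r * (g Y + (L - eta) * (y - Y))" using g_ge[OF y(1)] r_pos by simp
    moreover have "mu y * g1 y \<le> (C + (r - eps) * y) * L" using mug y Y by simp
    moreover have e: "eps * L - r * eta = D" using r_eta D_def by simp
    moreover have "r * (g Y + (L - eta) * (y - Y)) - (C + (r - eps) * y) * L
        = D * y + K0" unfolding K0_def e[symmetric] by (simp add: algebra_simps)
    ultimately show ?thesis by linarith
  qed
  obtain Cs where Cs: "Cs-lipschitz_on UNIV sig" using sig_lip by blast
  have Cs0: "Cs \<ge> 0" using Cs lipschitz_on_def by blast
  define M where "M = \<bar>sig 0\<bar> + Cs + 1"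
  have M_pos: "M > 0" using Cs0 M_def by simp
  have sigb: "(sig y)\<^sup>2 \<le> (M * y)\<^sup>2" if y: "y \<ge> 1" for y
  proof -
    have "dist (sig y) (sig 0) \<le> Cs * dist y 0" using Cs lipschitz_on_def by blast
    then have "\<bar>sig y - sig 0\<bar> \<le> Cs * y" using y by (simp add: dist_real_def)
    moreover have "\<bar>sig 0\<bar> \<le> \<bar>sig 0\<bar> * y" using y by (simp add: mult_le_cancel_left1)
    ultimately have "\<bar>sig y\<bar> \<le> M * y" using y unfolding M_def by (simp add: algebra_simps)
    then have "\<bar>sig y\<bar>\<^sup>2 \<le> (M * y)\<^sup>2" by (intro power_mono) auto
    then show ?thesis by simp
  qed
  define Y2 where "Y2 = max (max Y (max xa (-C/(r-eps)))) (max 1 (2*\<bar>K0\<bar>/D))"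
  have Y2: "Y2 \<ge> Y" "Y2 \<ge> xa" "Y2 \<ge> -C/(r-eps)" "Y2 \<ge> 1" "Y2 \<ge> 2*\<bar>K0\<bar>/D"
    unfolding Y2_def by auto
  define c where "c = D / M^2"
  have c_pos: "c > 0" using D_pos M_pos c_def by simp
  have g2b: "g2 y \<ge> c / y" if y: "y \<ge> Y2" for y
  proof -
    have y1: "y \<ge> Y" "y \<ge> xa" "y \<ge> -C/(r-eps)" "y \<ge> 1" "y \<ge> 2*\<bar>K0\<bar>/D" using Y2 y by auto
    have ypos: "y > 0" using y1 by simp
    have "D * y \<ge> 2 * \<bar>K0\<bar>" using y1(5) D_pos by (simp add: divide_le_eq mult.commute)
    then have "D * y + K0 \<ge> D * y / 2" by linarith
    then have A: "(sig y)\<^sup>2 / 2 * g2 y \<ge> D * y / 2" using key1[OF y1(1-3)] g_ode[OF ypos] by linarith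
    have s0: "(sig y)\<^sup>2 > 0" using A2 ypos by simp
    have "D * y > 0" using D_pos ypos by simp
    then have "(sig y)\<^sup>2 / 2 * g2 y > 0" using A by linarith
    then have g2p: "g2 y > 0" using s0 by (simp add: zero_less_mult_iff)
    have "(sig y)\<^sup>2 * g2 y \<le> (M * y)\<^sup>2 * g2 y" using sigb[OF y1(4)] g2p by (intro mult_right_mono) auto
    then have "D * y \<le> (M * y)\<^sup>2 * g2 y" using A by linarith
    then have "D * y \<le> (M^2 * y * g2 y) * y" by (simp add: power2_eq_square algebra_simps)
    then have "D \<le> M^2 * y * g2 y" using ypos by (simp add: ac_simps)
    then have "c \<le> g2 y * y" unfolding c_def using M_pos by (simp add: pos_divide_le_eq ac_simps)
    then show ?thesis using pos_divide_le_eq[OF ypos] by simp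
  qed
  define Z where "Z = Y2 * exp (L / c)"
  have Y2pos: "Y2 > 0" using Y2 by simp
  have "exp (L / c) \<ge> 1" using L_pos c_pos by simp
  then have Z: "Z \<ge> Y2" unfolding Z_def using Y2pos by (simp add: mult_le_cancel_left1)
  have "(\<lambda>t. g1 t - c * ln t) Y2 \<le> (\<lambda>t. g1 t - c * ln t) Z"
  proof (rule DERIV_nonneg_imp_nondecreasing[OF Z])
    fix t assume t: "Y2 \<le> t" "t \<le> Z"
    then have tpos: "t > 0" using Y2pos by simp
    have "((\<lambda>t. g1 t - c * ln t) has_real_derivative g2 t - c * (1 / t)) (at t)"
      using g1_deriv[OF tpos] tpos by (auto intro!: derivative_eq_intros)
    moreover have "g2 t - c * (1 / t) \<ge> 0" using g2b[OF t(1)] by simp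
    ultimately show "\<exists>y. ((\<lambda>t. g1 t - c * ln t) has_real_derivative y) (at t) \<and> 0 \<le> y" by blast
  qed
  moreover have "ln Z = ln Y2 + L / c" unfolding Z_def using Y2pos by (simp add: ln_mult)
  ultimately have "g1 Z \<ge> g1 Y2 + L" using c_pos by (simp add: algebra_simps)
  moreover have "g1 Y2 > 0" using g1_pos Y2pos by simp
  moreover have "g1 Z \<le> L" using le_L Z Y2 Y by simp
  ultimately show False by simp
qed


definition phi :: "real \<Rightarrow> real" where "phi y = y - k * g y / g1 y"

lemma part3: "y > 0 \<Longrightarrow> Jleft_deriv_eq g (phi y) y 1 \<longleftrightarrow> g (phi y) = (1 - k) * g y"
proof -
  assume y: "y > 0"
  have g1p: "g1 y > 0" using g1_pos y by simp
  have gp: "g y > 0" using g_pos y by simp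
  have "Jleft_deriv_eq g (phi y) y 1 \<longleftrightarrow> 1 = g1 y * (y - phi y) / (g y - g (phi y))"
    using Jleft_iff[OF g_deriv[OF y]] by simp
  also have "g1 y * (y - phi y) = k * g y" unfolding phi_def using g1p by simp
  also have "1 = k * g y / (g y - g (phi y)) \<longleftrightarrow> g (phi y) = (1 - k) * g y"
  proof (cases "g y - g (phi y) = 0")
    case True
    then show ?thesis using k_pos gp by (auto simp: algebra_simps)
  next
    case False
    then show ?thesis by (auto simp: field_simps)
  qed
  finally show ?thesis .
qed

lemma sol_props:
  assumes "0 \<le> lo" "lo < hi" "Rfun g lo hi hi = 1/k" "Jleft_deriv_eq g lo hi 1"
  shows "g lo = (1 - k) * g hi" "lo = phi hi" "lo < xs" "xs < hi" "g hi - g lo = g1 hi * (hi - lo)"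
proof -
  have hip: "hi > 0" using assms by simp
  have dpos: "g hi - g lo > 0" using g_mono assms by simp
  have "g hi / (g hi - g lo) = 1 / k" using assms(3) unfolding Rfun_def .
  then have e1: "k * g hi = g hi - g lo" using dpos k_pos by (simp add: field_simps)
  then show "g lo = (1 - k) * g hi" by (simp add: algebra_simps)
  have "1 = g1 hi * (hi - lo) / (g hi - g lo)" by (rule iffD1[OF Jleft_iff[OF g_deriv[OF hip]] assms(4)])
  then have e2: "g1 hi * (hi - lo) = g hi - g lo" using dpos by (simp add: eq_divide_eq)
  have g1p: "g1 hi > 0" using g1_pos hip by simp
  show "g hi - g lo = g1 hi * (hi - lo)" using e2 by simp
  have e3: "(hi - lo) * g1 hi = k * g hi" using e1 e2 by (simp add: mult.commute)
  have "hi - lo = k * g hi / g1 hi" using e3 g1p by (simp add: eq_divide_eq)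
  then show "lo = phi hi" unfolding phi_def by simp
  obtain c where c: "lo < c" "c < hi" "g hi - g lo = g1 c * (hi - lo)" using g_mvt[OF assms(1,2)] by blast
  show "xs < hi"
  proof (rule ccontr)
    assume "\<not> xs < hi"
    then have "g1 hi < g1 c" using g1_dec[of c hi] c assms by linarith
    then have "g1 hi * (hi - lo) < g1 c * (hi - lo)" using assms by (intro mult_strict_right_mono) auto
    then show False using c(3) e2 by linarith
  qed
  show "lo < xs"
  proof (rule ccontr)
    assume "\<not> lo < xs"
    then have "g1 c < g1 hi" using g1_inc[of c hi] c by linarith
    then have "g1 c * (hi - lo) < g1 hi * (hi - lo)" using assms by (intro mult_strict_right_mono) auto
    then show False using c(3) e2 by linarith
  qed
qed


lemma uniq_aux:
  assumes s1: "0 \<le> lo1" "lo1 < hi1" "Rfun g lo1 hi1 hi1 = 1/k" "Jleft_deriv_eq g lo1 hi1 1"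
    and s2: "0 \<le> lo2" "lo2 < hi2" "Rfun g lo2 hi2 hi2 = 1/k" "Jleft_deriv_eq g lo2 hi2 1"
    and lt: "hi1 < hi2"
  shows False
proof -
  note p1 = sol_props[OF s1] and p2 = sol_props[OF s2]
  have t1: "g hi1 - g lo1 = g1 hi1 * (hi1 - lo1)" using p1(5) .
  have t2: "g hi2 - g lo2 = g1 hi2 * (hi2 - lo2)" using p2(5) .
  define u where "u x = g x - (g hi2 + g1 hi2 * (x - hi2))" for x
  have g1lt: "g1 hi1 < g1 hi2" using g1_inc[of hi1 hi2] p1 lt by simp
  obtain c where c: "hi1 < c" "c < hi2" "g hi2 - g hi1 = g1 c * (hi2 - hi1)"
    using g_mvt[of hi1 hi2] lt s1 by auto
  have "g1 c < g1 hi2" using g1_inc[of c hi2] c p1 by simp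
  then have "g1 c * (hi2 - hi1) < g1 hi2 * (hi2 - hi1)" using lt by simp
  then have uhi1: "u hi1 > 0" unfolding u_def using c by (simp add: algebra_simps)
  have "(g1 hi2 - g1 hi1) * (hi1 - lo1) > 0" using g1lt s1 by simp
  then have ulo1: "u lo1 > 0" using uhi1 t1 unfolding u_def by (simp add: algebra_simps)
  have ulo2: "u lo2 = 0" using t2 unfolding u_def by (simp add: algebra_simps)
  obtain c' where c': "xs < c'" "c' < hi2" "g hi2 - g xs = g1 c' * (hi2 - xs)"
    using g_mvt[of xs hi2] p2 xs_pos by auto
  have "g1 c' < g1 hi2" using g1_inc[of c' hi2] c' by simp
  then have "g1 c' * (hi2 - xs) < g1 hi2 * (hi2 - xs)" using p2 by simp
  then have uxs: "u xs > 0" unfolding u_def using c' by (simp add: algebra_simps)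
  have lo21: "lo2 < lo1"
  proof (rule ccontr)
    assume "\<not> lo2 < lo1"
    then have le: "lo1 < lo2" using ulo1 ulo2 by (cases "lo1 = lo2") auto
    obtain c1 where c1: "lo1 < c1" "c1 < lo2" "g lo2 - g lo1 = g1 c1 * (lo2 - lo1)"
      using g_mvt[of lo1 lo2] le s1 by auto
    obtain c2 where c2: "lo2 < c2" "c2 < xs" "g xs - g lo2 = g1 c2 * (xs - lo2)"
      using g_mvt[of lo2 xs] p2 s2 by auto
    have "g1 c2 < g1 c1" using g1_dec[of c1 c2] c1 c2 s1 by simp
    have "u lo2 - u lo1 = (g1 c1 - g1 hi2) * (lo2 - lo1)" unfolding u_def using c1 by (simp add: algebra_simps)
    then have "(g1 c1 - g1 hi2) * (lo2 - lo1) < 0" using ulo1 ulo2 by simp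
    then have "g1 c1 - g1 hi2 < 0" using le by (simp add: mult_less_0_iff)
    then have "g1 c2 - g1 hi2 < 0" using \<open>g1 c2 < g1 c1\<close> by simp
    then have "(g1 c2 - g1 hi2) * (xs - lo2) < 0" using p2 by (simp add: mult_less_0_iff)
    moreover have "u xs - u lo2 = (g1 c2 - g1 hi2) * (xs - lo2)" unfolding u_def using c2 by (simp add: algebra_simps)
    ultimately show False using uxs ulo2 by simp
  qed
  have "g lo2 < g lo1" using g_mono[of lo2 lo1] lo21 s2 by simp
  moreover have "g hi1 < g hi2" using g_mono[of hi1 hi2] lt s1 by simp
  then have "(1 - k) * g hi1 \<le> (1 - k) * g hi2" using k_le by (intro mult_left_mono) auto
  ultimately show False using p1(1) p2(1) by simp
qed

lemma uniq:
  assumes s1: "0 \<le> lo1" "lo1 < hi1" "Rfun g lo1 hi1 hi1 = 1/k" "Jleft_deriv_eq g lo1 hi1 1"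
    and s2: "0 \<le> lo2" "lo2 < hi2" "Rfun g lo2 hi2 hi2 = 1/k" "Jleft_deriv_eq g lo2 hi2 1"
  shows "lo1 = lo2 \<and> hi1 = hi2"
proof -
  have "hi1 = hi2" using uniq_aux[OF s1 s2] uniq_aux[OF s2 s1] by (cases "hi1 < hi2"; cases "hi2 < hi1") auto
  then show ?thesis using sol_props(2)[OF s1] sol_props(2)[OF s2] by simp
qed


lemma phi_deriv:
  assumes t: "t > 0"
  shows "(phi has_real_derivative 1 - k * ((g1 t * g1 t - g t * g2 t) / (g1 t * g1 t))) (at t)"
proof -
  have "g1 t \<noteq> 0" using g1_pos t by (simp add: less_imp_neq[symmetric])
  then show ?thesis unfolding phi_def[abs_def]
    using g_deriv[OF t] g1_deriv[OF t]
    by (auto intro!: derivative_eq_intros simp: times_divide_eq_right algebra_simps)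
qed

lemma phi_mono: "xs \<le> a \<Longrightarrow> a \<le> b \<Longrightarrow> phi a \<le> phi b"
proof -
  assume h: "xs \<le> a" "a \<le> b"
  show ?thesis
  proof (rule DERIV_nonneg_imp_nondecreasing[OF h(2)])
    fix t assume t: "a \<le> t" "t \<le> b"
    then have tp: "t > 0" and txs: "t \<ge> xs" using h xs_pos by auto
    have g1p: "g1 t > 0" using g1_pos tp by simp
    have "g2 t \<ge> 0" using g2_pos[of t] xs_infl txs by (cases "t = xs") auto
    then have "g t * g2 t \<ge> 0" using g_pos[OF tp] by simp
    then have "(g1 t * g1 t - g t * g2 t) / (g1 t * g1 t) \<le> 1" using g1p by (simp add: divide_le_eq)
    then have "k * ((g1 t * g1 t - g t * g2 t) / (g1 t * g1 t)) \<le> k * 1" using k_pos by (intro mult_left_mono) auto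
    then have "1 - k * ((g1 t * g1 t - g t * g2 t) / (g1 t * g1 t)) \<ge> 0" using k_le by simp
    then show "\<exists>y. (phi has_real_derivative y) (at t) \<and> 0 \<le> y" using phi_deriv[OF tp] by blast
  qed
qed

lemma phi_cont: "continuous_on {xs..} phi"
proof -
  have "isCont phi t" if "t \<in> {xs..}" for t
    using phi_deriv[of t] that xs_pos DERIV_isCont by fastforce
  then show ?thesis by (intro continuous_at_imp_continuous_on) auto
qed

lemma existence: "\<exists>lo hi. 0 \<le> lo \<and> lo < hi \<and> Rfun g lo hi hi = 1/k \<and> Jleft_deriv_eq g lo hi 1"
proof -
  define F where "F y = g (phi y) - (1 - k) * g y" for y
  define Y where "Y = xs + 1"
  obtain y2 where y2: "y2 \<ge> xs" "g1 y2 \<ge> max (g Y) (g1 Y) + 1" using g1_unbounded by blast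
  have y2Y: "y2 > Y"
  proof (rule ccontr)
    assume "\<not> y2 > Y"
    then have "g1 y2 \<le> g1 Y" using g1_inc'[of y2 Y] y2 by simp
    then show False using y2 by simp
  qed
  have g1p: "g1 y2 > 0" using g1_pos y2 xs_pos by simp
  obtain c where c: "Y < c" "c < y2" "g y2 - g Y = g1 c * (y2 - Y)" using g_mvt[of Y y2] y2Y xs_pos Y_def by auto
  have "g1 c \<le> g1 y2" using g1_inc'[of c y2] c Y_def xs_pos by simp
  then have "g1 c * (y2 - Y) \<le> g1 y2 * (y2 - Y)" using c by (intro mult_right_mono) auto
  moreover have "k * g y2 \<le> g y2" using k_le g_pos[of y2] y2 xs_pos by simp
  moreover have "g Y \<le> g1 y2 * (Y - xs)" using y2 Y_def by simp
  ultimately have "k * g y2 \<le> g1 y2 * (y2 - xs)" using c by (simp add: algebra_simps)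
  then have "k * g y2 / g1 y2 \<le> y2 - xs" using g1p by (simp add: divide_le_eq mult.commute)
  then have phy2: "phi y2 \<ge> xs" unfolding phi_def by simp
  have Fy2: "F y2 \<ge> 0"
  proof -
    define p where "p = phi y2"
    have "k * g y2 / g1 y2 > 0" using k_pos g_pos[of y2] g1p y2 xs_pos by simp
    then have pl: "p < y2" unfolding p_def phi_def by simp
    have e: "g1 y2 * (y2 - p) = k * g y2" unfolding p_def phi_def using g1p by simp
    obtain d where d: "p < d" "d < y2" "g y2 - g p = g1 d * (y2 - p)" using g_mvt[of p y2] pl phy2 xs_pos p_def by auto
    have "g1 d < g1 y2" using g1_inc[of d y2] d phy2 p_def by simp
    then have "g1 d * (y2 - p) < g1 y2 * (y2 - p)" using pl by simp
    then show ?thesis unfolding F_def p_def[symmetric] using d e by (simp add: algebra_simps)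
  qed
  obtain a where a: "xs \<le> a" "a \<le> y2" "phi a \<ge> 0" "F a \<le> 0"
  proof (cases "phi xs \<ge> 0")
    case True
    define p where "p = phi xs"
    have g1x: "g1 xs > 0" using g1_pos xs_pos by simp
    have "k * g xs / g1 xs > 0" using k_pos g_pos[of xs] g1x xs_pos by simp
    then have pl: "p < xs" unfolding p_def phi_def by simp
    have e: "g1 xs * (xs - p) = k * g xs" unfolding p_def phi_def using g1x by simp
    obtain d where d: "p < d" "d < xs" "g xs - g p = g1 d * (xs - p)" using g_mvt[of p xs] pl True p_def by auto
    have "g1 xs < g1 d" using g1_dec[of d xs] d True p_def by simp
    then have "g1 xs * (xs - p) < g1 d * (xs - p)" using pl by simp
    then have "F xs \<le> 0" unfolding F_def p_def[symmetric] using d e by (simp add: algebra_simps)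
    then show ?thesis using that[of xs] True y2 by simp
  next
    case False
    have "continuous_on {xs..y2} phi" using phi_cont by (rule continuous_on_subset) auto
    then obtain a where a: "xs \<le> a" "a \<le> y2" "phi a = 0"
      using IVT'[of phi xs 0 y2] False phy2 y2 xs_pos by auto
    have "F a \<le> 0" unfolding F_def using a g_0 g_pos[of a] k_le xs_pos by simp
    then show ?thesis using that[of a] a by simp
  qed
  have phi_nn: "phi y \<ge> 0" if "a \<le> y" for y using phi_mono[of a y] a that by simp
  have "continuous_on {a..y2} F"
  proof -
    have "continuous_on {a..y2} phi" using phi_cont by (rule continuous_on_subset) (use a in auto)
    moreover have "phi ` {a..y2} \<subseteq> {0..}" using phi_nn by auto
    ultimately have "continuous_on {a..y2} (\<lambda>y. g (phi y))"
      using continuous_on_compose2[OF g_cont, of "{a..y2}" phi] by blast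
    moreover have "continuous_on {a..y2} g" using g_cont by (rule continuous_on_subset) (use a xs_pos in auto)
    ultimately show ?thesis unfolding F_def by (intro continuous_intros)
  qed
  then obtain y where y: "a \<le> y" "y \<le> y2" "F y = 0" using IVT'[of F a 0 y2] a Fy2 by auto
  have yp: "y > 0" using y a xs_pos by simp
  have lo0: "phi y \<ge> 0" using phi_nn y by simp
  have "k * g y / g1 y > 0" using k_pos g_pos[OF yp] g1_pos[of y] yp by simp
  then have lohi: "phi y < y" unfolding phi_def by simp
  have eq: "g (phi y) = (1 - k) * g y" using y F_def by simp
  have "Rfun g (phi y) y y = 1 / k" unfolding Rfun_def eq using g_pos[OF yp] k_pos
    by (simp add: algebra_simps)
  moreover have "Jleft_deriv_eq g (phi y) y 1" using part3[OF yp] eq by simp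
  ultimately show ?thesis using lo0 lohi by blast
qed

end

theorem lemma4p4:
  fixes r k xs :: real
    and mu sig mu' sig' g g1 g2 :: "real \<Rightarrow> real"
  assumes r_pos: "r > 0"
    and mu_deriv: "\<And>x. (mu has_real_derivative mu' x) (at x)"
    and sig_deriv: "\<And>x. (sig has_real_derivative sig' x) (at x)"
    and mu'_cont: "continuous_on UNIV mu'"
    and sig'_cont: "continuous_on UNIV sig'"
    and mu_lip: "\<exists>C. C-lipschitz_on UNIV mu"
    and sig_lip: "\<exists>C. C-lipschitz_on UNIV sig"
    and mu'_lip: "\<exists>C. C-lipschitz_on UNIV mu'"
    and sig'_lip: "\<exists>C. C-lipschitz_on UNIV sig'"
    and A2: "\<And>x. x \<ge> 0 \<Longrightarrow> (sig x)\<^sup>2 > 0"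
    and A3: "\<And>x. x \<ge> 0 \<Longrightarrow> mu' x < r"
    and A4: "\<exists>\<epsilon>>0. \<exists>xa\<ge>0. \<forall>x\<ge>xa. mu' x < r - \<epsilon>"
    and A5: "mu 0 > 0"
    and g_deriv: "\<And>x. x > 0 \<Longrightarrow> (g has_real_derivative g1 x) (at x)"
    and g1_deriv: "\<And>x. x > 0 \<Longrightarrow> (g1 has_real_derivative g2 x) (at x)"
    and g2_cont: "continuous_on {0<..} g2"
    and g_ode: "\<And>x. x > 0 \<Longrightarrow> mu x * g1 x + (sig x)\<^sup>2 / 2 * g2 x = r * g x"
    and g_0: "g 0 = 0"
    and g_deriv0: "(g has_real_derivative g1 0) (at 0 within {0..})"
    and g1_0: "g1 0 > 0"
    and xs_pos: "xs > 0"
    and xs_infl: "g2 xs = 0"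
    and g2_neg: "\<And>x. 0 < x \<Longrightarrow> x < xs \<Longrightarrow> g2 x < 0"
    and g2_pos: "\<And>x. xs < x \<Longrightarrow> g2 x > 0"
    and k_pos: "0 < k" and k_le: "k \<le> 1"
  shows "(\<exists>!p. 0 \<le> fst p \<and> fst p < snd p
                 \<and> Rfun g (fst p) (snd p) (snd p) = 1 / k
                 \<and> Jleft_deriv_eq g (fst p) (snd p) 1)
     \<and> (\<forall>lo hi. 0 \<le> lo \<and> lo < hi \<and> Rfun g lo hi hi = 1 / k \<and> Jleft_deriv_eq g lo hi 1 \<longrightarrow>
          lo < xs \<and> xs < hi
          \<and> (k = 1 \<longrightarrow> lo = 0) \<and> (k < 1 \<longrightarrow> lo > 0)
          \<and> Jleft_deriv_eq g (hi - k * g hi / g1 hi) hi 1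
          \<and> lo = hi - k * g hi / g1 hi)
     \<and> (\<forall>y>0. Jleft_deriv_eq g (y - k * g y / g1 y) y 1
                 \<longleftrightarrow> g (y - k * g y / g1 y) = (1 - k) * g y)"
proof -
  obtain eps0 xa where e0: "eps0 > 0" "xa \<ge> 0" "\<forall>x\<ge>xa. mu' x < r - eps0" using A4 by blast
  define eps where "eps = min eps0 (r/2)"
  have e: "eps > 0" "eps < r" "\<And>x. x \<ge> xa \<Longrightarrow> mu' x < r - eps"
    using e0 r_pos unfolding eps_def by auto
  interpret S: setting r k xs xa eps mu sig mu' g g1 g2
    using assms e e0 by unfold_locales auto
  have P1: "\<exists>!p. 0 \<le> fst p \<and> fst p < snd p
                 \<and> Rfun g (fst p) (snd p) (snd p) = 1 / k
                 \<and> Jleft_deriv_eq g (fst p) (snd p) 1"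
  proof -
    obtain lo hi where lh: "0 \<le> lo \<and> lo < hi \<and> Rfun g lo hi hi = 1/k \<and> Jleft_deriv_eq g lo hi 1"
      using S.existence by blast
    show ?thesis
    proof (rule ex1I[of _ "(lo, hi)"])
      show "0 \<le> fst (lo, hi) \<and> fst (lo, hi) < snd (lo, hi) \<and> Rfun g (fst (lo, hi)) (snd (lo, hi)) (snd (lo, hi)) = 1 / k \<and> Jleft_deriv_eq g (fst (lo, hi)) (snd (lo, hi)) 1"
        using lh by simp
    next
      fix p :: "real \<times> real"
      assume "0 \<le> fst p \<and> fst p < snd p \<and> Rfun g (fst p) (snd p) (snd p) = 1 / k \<and> Jleft_deriv_eq g (fst p) (snd p) 1"
      then have "fst p = lo \<and> snd p = hi" using S.uniq lh by blast
      then show "p = (lo, hi)" by (simp add: prod_eq_iff)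
    qed
  qed
  have P2: "\<forall>lo hi. 0 \<le> lo \<and> lo < hi \<and> Rfun g lo hi hi = 1 / k \<and> Jleft_deriv_eq g lo hi 1 \<longrightarrow>
          lo < xs \<and> xs < hi
          \<and> (k = 1 \<longrightarrow> lo = 0) \<and> (k < 1 \<longrightarrow> lo > 0)
          \<and> Jleft_deriv_eq g (hi - k * g hi / g1 hi) hi 1
          \<and> lo = hi - k * g hi / g1 hi"
  proof (intro allI impI)
    fix lo hi assume h: "0 \<le> lo \<and> lo < hi \<and> Rfun g lo hi hi = 1 / k \<and> Jleft_deriv_eq g lo hi 1"
    then have h': "0 \<le> lo" "lo < hi" "Rfun g lo hi hi = 1 / k" "Jleft_deriv_eq g lo hi 1" by auto
    note sp = S.sol_props[OF h']
    have lo_eq: "lo = hi - k * g hi / g1 hi" using sp(2) S.phi_def by simp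
    have hip: "hi > 0" using h' by simp
    have k1: "k = 1 \<longrightarrow> lo = 0"
    proof
      assume "k = 1"
      then have "g lo = 0" using sp(1) by simp
      then show "lo = 0" using S.g_pos[of lo] h' by (cases "lo = 0") auto
    qed
    have k2: "k < 1 \<longrightarrow> lo > 0"
    proof
      assume "k < 1"
      then have "g lo > 0" using sp(1) S.g_pos[OF hip] by simp
      then show "lo > 0" using h' g_0 by (cases "lo = 0") auto
    qed
    show "lo < xs \<and> xs < hi
          \<and> (k = 1 \<longrightarrow> lo = 0) \<and> (k < 1 \<longrightarrow> lo > 0)
          \<and> Jleft_deriv_eq g (hi - k * g hi / g1 hi) hi 1
          \<and> lo = hi - k * g hi / g1 hi"
      using sp(3,4) k1 k2 lo_eq h'(4) by simp
  qed
  have P3: "\<forall>y>0. Jleft_deriv_eq g (y - k * g y / g1 y) y 1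
                 \<longleftrightarrow> g (y - k * g y / g1 y) = (1 - k) * g y"
    using S.part3 unfolding S.phi_def by blast
  show ?thesis using P1 P2 P3 by blast
qed

end
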